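(* Let $\alpha>-1$, $j\in\mathbb{N}\cup\{0\}$, $M>0$. Let $\{c_n^{(\alpha)}\}_{n\ge0}$ be the orthonormal Gegenbauer polynomials with respect to $(1-x^2)^\alpha$ on $(-1,1)$, let $\lambda_n=n^2+n(2\alpha+1)$, $K_n^{(j,j)}(0,0)=\sum_{i=0}^n\big((c_i^{(\alpha)})^{(j)}(0)\big)^2$, and for $n\ge1$ define $$\widetilde\lambda_{j+2n}=\lambda_{j+2n}+M\sum_{i=1}^n(\lambda_{j+2i}-\lambda_{j+2i-2})K_{j+2i-1}^{(j,j)}(0,0).$$ Then: if $j=2r$, $$\lim_{n\to+\infty}\frac{\widetilde\lambda_{2r+2n}}{n^{4r+3}}=\frac{2^{4(r+1)}M}{\pi(4r+3)(4r+1)};$$ if $j=2r+1$, $$\lim_{n\to+\infty}\frac{\widetilde\lambda_{2r+1+2n}}{n^{4r+5}}=\frac{2^{4r+6}M}{\pi(4r+5)(4r+3)}.$$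
   Context: Background: $\lambda_n$ are the eigenvalues of the Gegenbauer equation $(x^2-1)y''+2(\alpha+1)xy'=n(n+2\alpha+1)y$, and $\widetilde\lambda_{j+2n}$ are eigenvalues of the differential operator $\mathbf{L}$ having as eigenfunctions the polynomials orthonormal with respect to $(f,g)=\int_{-1}^1 fg(1-x^2)^\alpha dx+Mf^{(j)}(0)g^{(j)}(0)$. *)

theory Defs
  imports "HOL-Analysis.Analysis" "HOL-Computational_Algebra.Polynomial"
begin

definition geg_weight :: "real \<Rightarrow> real \<Rightarrow> real" where
  "geg_weight \<alpha> x = (1 - x^2) powr \<alpha>"

definition orthonormal_gegenbauer :: "real \<Rightarrow> (nat \<Rightarrow> real poly) \<Rightarrow> bool" where
  "orthonormal_gegenbauer \<alpha> c \<longleftrightarrow>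
     (\<forall>n. degree (c n) = n \<and> lead_coeff (c n) > 0) \<and>
     (\<forall>n m. set_integrable lborel {-1<..<1::real}
                (\<lambda>x. poly (c n) x * poly (c m) x * geg_weight \<alpha> x) \<and>
            (\<integral>x\<in>{-1<..<1::real}. poly (c n) x * poly (c m) x * geg_weight \<alpha> x \<partial>lborel)
              = (if n = m then 1 else 0))"

definition geg_lambda :: "real \<Rightarrow> nat \<Rightarrow> real" where
  "geg_lambda \<alpha> n = real n ^ 2 + real n * (2 * \<alpha> + 1)"

definition kernelK :: "(nat \<Rightarrow> real poly) \<Rightarrow> nat \<Rightarrow> nat \<Rightarrow> real" where
  "kernelK c j n = (\<Sum>i=0..n. (poly ((pderiv ^^ j) (c i)) 0) ^ 2)"

text \<open>lambda-tilde_{j+2n}, written as a function of n.\<close>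
definition lambda_tilde :: "real \<Rightarrow> real \<Rightarrow> (nat \<Rightarrow> real poly) \<Rightarrow> nat \<Rightarrow> nat \<Rightarrow> real" where
  "lambda_tilde \<alpha> M c j n = geg_lambda \<alpha> (j + 2*n)
     + M * (\<Sum>i=1..n. (geg_lambda \<alpha> (j + 2*i) - geg_lambda \<alpha> (j + 2*i - 2))
                        * kernelK c j (j + 2*i - 1))"

end

theory Submission
  imports Defs
begin

definition mom :: "real \<Rightarrow> nat \<Rightarrow> real" where
  "mom a k = (if even k then Beta (real (k div 2) + 1/2) (a + 1) else 0)"

lemma mom_rec: assumes "a > -1" shows "mom a (k+2) * (real k + 2*a + 3) = (real k + 1) * mom a k"
proof (cases "even k")
  case True
  then obtain m where k: "k = 2*m" by blast
  have "(real m + 1/2 + (a+1)) * Beta (real m + 1/2 + 1) (a+1) = (real m + 1/2) * Beta (real m + 1/2) (a+1)"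
    using assms by (intro Beta_plus1_left) (auto simp: nonpos_Reals_def)
  then show ?thesis using k by (simp add: mom_def algebra_simps)
qed (simp add: mom_def)

lemma mom_shift: assumes "a > -1" shows "mom (a+1) k = mom a k - mom a (k+2)"
proof (cases "even k")
  case True
  then obtain m where k: "k = 2*m" by blast
  have 1: "(real m + 1/2 + (a+1)) * Beta (real m + 1/2 + 1) (a+1) = (real m + 1/2) * Beta (real m + 1/2) (a+1)"
    using assms by (intro Beta_plus1_left) (auto simp: nonpos_Reals_def)
  have 2: "(real m + 1/2 + (a+1)) * Beta (real m + 1/2) (a+1+1) = (a+1) * Beta (real m + 1/2) (a+1)"
    using assms by (intro Beta_plus1_right) (auto simp: nonpos_Reals_def)
  have pos: "real m + 1/2 + (a+1) \<noteq> 0" using assms by linarith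
  define s where "s = real m + 1/2 + (a+1)"
  define B where "B = Beta (real m + 1/2) (a+1)"
  have 1: "Beta (real m + 1/2 + 1) (a+1) = (real m + 1/2) / s * B"
    using 1 pos unfolding s_def B_def by (simp add: field_simps)
  have 2: "Beta (real m + 1/2) (a+1+1) = (a+1) / s * B"
    using 2 pos unfolding s_def B_def by (simp add: field_simps)
  have eq: "(a+1) / s = 1 - (real m + 1/2) / s" using pos unfolding s_def by (simp add: field_simps)
  have "(a+1) / s * B = B - (real m + 1/2) / s * B" unfolding eq by (simp add: left_diff_distrib)
  then have "Beta (real m + 1/2) (a+1+1) = Beta (real m + 1/2) (a+1) - Beta (real m + 1/2 + 1) (a+1)"
    using 1 2 unfolding B_def by simp
  then show ?thesis using k by (simp add: mom_def algebra_simps)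
qed (simp add: mom_def)

definition Phi :: "real \<Rightarrow> real poly \<Rightarrow> real" where
  "Phi a p = (\<Sum>i\<le>degree p. coeff p i * mom a i)"

lemma Phi_alt: assumes "degree p \<le> N" shows "Phi a p = (\<Sum>i\<le>N. coeff p i * mom a i)"
  unfolding Phi_def
  by (rule sum.mono_neutral_left) (use assms in \<open>auto simp: coeff_eq_0\<close>)

lemma Phi_add: "Phi a (p + q) = Phi a p + Phi a q"
proof -
  let ?N = "max (degree p) (degree q)"
  have "degree (p+q) \<le> ?N" by (rule degree_add_le) auto
  then show ?thesis
    by (simp add: Phi_alt[of _ ?N] algebra_simps sum.distrib)
qed

lemma Phi_smult: "Phi a (smult c p) = c * Phi a p"
  by (simp add: Phi_alt[of _ "degree p"] sum_distrib_left mult_ac)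

lemma Phi_minus: "Phi a (- p) = - Phi a p"
  using Phi_smult[of a "-1" p] by simp

lemma Phi_diff: "Phi a (p - q) = Phi a p - Phi a q"
  using Phi_add[of a p "-q"] Phi_minus[of a q] by simp

lemma Phi_0 [simp]: "Phi a 0 = 0" by (simp add: Phi_def)

lemma Phi_monom: "Phi a (monom c k) = c * mom a k"
  by (simp add: Phi_alt[of _ k] degree_monom_le sum.remove[of _ k])

lemma Phi_sum: "Phi a (\<Sum>i\<in>A. f i) = (\<Sum>i\<in>A. Phi a (f i))"
  by (induction A rule: infinite_finite_induct) (auto simp: Phi_add)

definition Lop :: "real \<Rightarrow> real poly \<Rightarrow> real poly" where
  "Lop a p = pCons 0 (pCons 0 (pderiv (pderiv p))) - pderiv (pderiv p)
             + smult (2*(a+1)) (pCons 0 (pderiv p))"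

lemma Lop_add: "Lop a (p + q) = Lop a p + Lop a q"
  by (simp add: Lop_def pderiv_add smult_add_right algebra_simps)

lemma Lop_smult: "Lop a (smult c p) = smult c (Lop a p)"
  by (simp add: Lop_def pderiv_smult smult_add_right smult_diff_right mult.commute)

lemma Lop_0 [simp]: "Lop a 0 = 0" by (simp add: Lop_def)

lemma Lop_sum: "Lop a (\<Sum>i\<in>A. f i) = (\<Sum>i\<in>A. Lop a (f i))"
  by (induction A rule: infinite_finite_induct) (auto simp: Lop_add)

lemma pderiv_sum': "pderiv (\<Sum>i\<in>A. f i) = (\<Sum>i\<in>A. pderiv (f i))"
  by (induction A rule: infinite_finite_induct) (auto simp: pderiv_add)

lemma coeff_Lop: "coeff (Lop a p) k =
   (real k * (real k - 1) + 2*(a+1)*real k) * coeff p k - (real k + 2) * (real k + 1) * coeff p (k+2)"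
proof (cases k)
  case 0 then show ?thesis by (simp add: Lop_def coeff_pderiv coeff_pCons algebra_simps)
next
  case (Suc m)
  show ?thesis
  proof (cases m)
    case 0 then show ?thesis using Suc by (simp add: Lop_def coeff_pderiv coeff_pCons algebra_simps)
  next
    case (Suc m')
    then show ?thesis using \<open>k = Suc m\<close> by (simp add: Lop_def coeff_pderiv coeff_pCons algebra_simps)
  qed
qed

definition lam :: "real \<Rightarrow> nat \<Rightarrow> real" where
  "lam a m = real m * (real m - 1) + 2*(a+1)*real m"

lemma Lop_monom: "Lop a (monom 1 m) = monom (lam a m) m - monom (real m * (real m - 1)) (m - 2)"
proof (rule poly_eqI)
  fix t
  show "coeff (Lop a (monom 1 m)) t = coeff (monom (lam a m) m - monom (real m * (real m - 1)) (m - 2)) t"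
  proof (cases "m \<ge> 2")
    case True
    then show ?thesis unfolding coeff_Lop lam_def by (auto simp: algebra_simps of_nat_diff)
  next
    case False
    then have "m = 0 \<or> m = 1" by auto
    then show ?thesis unfolding coeff_Lop lam_def by auto
  qed
qed

lemma Phi_Lop_monom: "Phi a (Lop a (monom 1 m) * monom 1 k) =
   lam a m * mom a (m+k) - real m * (real m - 1) * mom a (m - 2 + k)"
  by (simp add: Lop_monom left_diff_distrib mult_monom Phi_diff Phi_monom)

lemma Phi_pderiv_monom: "Phi b (pderiv (monom 1 m) * pderiv (monom 1 k)) =
   real m * real k * mom b (m - 1 + (k - 1))"
  by (simp add: pderiv_monom mult_monom Phi_monom)

lemma F1_monom: assumes "a > -1"
  shows "Phi a (Lop a (monom 1 m) * monom 1 k) = Phi (a+1) (pderiv (monom 1 m) * pderiv (monom 1 k))"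
  unfolding Phi_Lop_monom Phi_pderiv_monom
proof (cases m)
  case 0 then show "lam a m * mom a (m + k) - real m * (real m - 1) * mom a (m - 2 + k) =
    real m * real k * mom (a + 1) (m - 1 + (k - 1))" by (simp add: lam_def)
next
  case (Suc m')
  show "lam a m * mom a (m + k) - real m * (real m - 1) * mom a (m - 2 + k) =
    real m * real k * mom (a + 1) (m - 1 + (k - 1))"
  proof (cases k)
    case 0
    show ?thesis
    proof (cases m')
      case 0 then show ?thesis using Suc \<open>k = 0\<close> by (simp add: lam_def mom_def)
    next
      case (Suc m'')
      have r: "mom a (m''+2) * (real m'' + 2*a + 3) = (real m'' + 1) * mom a m''"
        using mom_rec[OF assms] .
      have "lam a m * mom a (m + k) - real m * (real m - 1) * mom a (m - 2 + k)
         = (real m'' + 2) * (mom a (m''+2) * (real m'' + 2*a + 3) - (real m'' + 1) * mom a m'')"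
        using \<open>m = Suc m'\<close> Suc \<open>k = 0\<close> by (simp add: lam_def algebra_simps)
      then show ?thesis using r \<open>k = 0\<close> by simp
    qed
  next
    case (Suc k')
    have r: "mom a (m'+k'+2) * (real (m'+k') + 2*a + 3) = (real (m'+k') + 1) * mom a (m'+k')"
      using mom_rec[OF assms] .
    have sh: "mom (a+1) (m'+k') = mom a (m'+k') - mom a (m'+k'+2)" using mom_shift[OF assms] .
    have e2: "real m * (real m - 1) * mom a (m - 2 + k) = real m * (real m - 1) * mom a (m'+k')"
      using \<open>m = Suc m'\<close> Suc by (cases m') auto
    have e3: "mom (a + 1) (m - 1 + (k - 1)) = mom a (m'+k') - mom a (m'+k'+2)"
      using sh \<open>m = Suc m'\<close> Suc by simp
    have e4: "mom a (m + k) = mom a (m'+k'+2)" using \<open>m = Suc m'\<close> Suc by simp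
    define A0 where "A0 = mom a (m'+k')"
    define A2 where "A2 = mom a (m'+k'+2)"
    have h: "lam a m * A2 - real m * (real m - 1) * A0 -
          real m * real k * (A0 - A2)
        = (real m' + 1) * (A2 * (real (m'+k') + 2*a + 3) - (real (m'+k') + 1) * A0)"
      using \<open>m = Suc m'\<close> Suc by (simp add: lam_def algebra_simps)
    have key: "A2 * (real (m'+k') + 2*a + 3) - (real (m'+k') + 1) * A0 = 0"
      using r unfolding A0_def A2_def by simp
    show ?thesis unfolding e2 e3 e4 A0_def[symmetric] A2_def[symmetric]
      using h key by simp
  qed
qed

lemma poly_monom_expand: "(p::real poly) = (\<Sum>i\<le>degree p. smult (coeff p i) (monom 1 i))"
proof -
  have "(\<Sum>i\<le>degree p. smult (coeff p i) (monom 1 i)) = (\<Sum>i\<le>degree p. monom (coeff p i) i)"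
    by (simp add: smult_monom)
  then show ?thesis using poly_as_sum_of_monoms[of p] by simp
qed

lemma F1: assumes "a > -1"
  shows "Phi a (Lop a p * q) = Phi (a+1) (pderiv p * pderiv q)"
proof -
  have L: "Lop a p * q = (\<Sum>i\<le>degree p. \<Sum>k\<le>degree q.
      smult (coeff p i * coeff q k) (Lop a (monom 1 i) * monom 1 k))"
    apply (subst (1) poly_monom_expand[of p], subst (1) poly_monom_expand[of q])
    by (simp add: Lop_sum Lop_smult sum_product mult_smult_left mult_smult_right) (simp add: mult.commute)
  have R: "pderiv p * pderiv q = (\<Sum>i\<le>degree p. \<Sum>k\<le>degree q.
      smult (coeff p i * coeff q k) (pderiv (monom 1 i) * pderiv (monom 1 k)))"
    apply (subst (1) poly_monom_expand[of p], subst (1) poly_monom_expand[of q])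
    by (simp add: pderiv_sum' pderiv_smult sum_product mult_smult_left mult_smult_right) (simp add: mult.commute)
  show ?thesis unfolding L R
    by (simp add: Phi_sum Phi_smult F1_monom[OF assms])
qed

lemma Lop_sym: assumes "a > -1"
  shows "Phi a (Lop a p * q) = Phi a (p * Lop a q)"
  using F1[OF assms, of p q] F1[OF assms, of q p] by (simp add: mult.commute)


definition lowdeg :: "nat \<Rightarrow> real poly \<Rightarrow> bool" where
  "lowdeg n q \<longleftrightarrow> (\<forall>k\<ge>n. coeff q k = 0)"

lemma lowdeg_expand: assumes "lowdeg n r"
  shows "r = (\<Sum>i<n. smult (coeff r i) (monom 1 i))"
proof (rule poly_eqI)
  fix k
  have "coeff (\<Sum>i<n. smult (coeff r i) (monom 1 i)) k = (\<Sum>i<n. if i = k then coeff r i else 0)"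
    unfolding coeff_sum by (intro sum.cong) auto
  also have "\<dots> = (if k < n then coeff r k else 0)" by (simp add: sum.delta)
  also have "\<dots> = coeff r k" using assms by (auto simp: lowdeg_def)
  finally show "coeff r k = coeff (\<Sum>i<n. smult (coeff r i) (monom 1 i)) k" by simp
qed

lemma ORTH: assumes "\<forall>k<n. Phi a (monom 1 k * P) = 0" "lowdeg n r"
  shows "Phi a (r * P) = 0"
proof -
  have "r * P = (\<Sum>i<n. smult (coeff r i) (monom 1 i * P))"
    by (subst lowdeg_expand[OF assms(2)]) (simp add: sum_distrib_right mult_smult_left)
  then show ?thesis using assms(1) by (simp add: Phi_sum Phi_smult)
qed

lemma lowdeg_Lop_monom: "k < n \<Longrightarrow> lowdeg n (Lop a (monom 1 k))"
  unfolding lowdeg_def by (auto simp: coeff_Lop)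

lemma lowdeg_Lop_diff: assumes "degree P = n"
  shows "lowdeg n (Lop a P - smult (lam a n) P)"
  unfolding lowdeg_def
proof (intro allI impI)
  fix t assume t: "n \<le> t"
  have "coeff P (t+2) = 0" using assms t by (intro coeff_eq_0) auto
  moreover have "t \<noteq> n \<Longrightarrow> coeff P t = 0" using assms t by (intro coeff_eq_0) auto
  ultimately show "coeff (Lop a P - smult (lam a n) P) t = 0"
    by (cases "t = n") (auto simp: coeff_Lop lam_def)
qed

fun H :: "real \<Rightarrow> nat \<Rightarrow> real" where
  "H a 0 = mom a 0"
| "H a (Suc m) = (real m + 1) / (real m + 2*a + 2) * H (a+1) m"

lemma monic_norm:
  assumes "a > -1" "degree P = n" "coeff P n = 1" "\<forall>k<n. Phi a (monom 1 k * P) = 0"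
  shows "Phi a (P*P) = H a n"
  using assms
proof (induction n arbitrary: a P)
  case 0
  then have "P = 1" by (metis degree_0_id one_pCons)
  then show ?case by (simp flip: monom_eq_1 add: Phi_monom mult_monom)
next
  case (Suc m)
  define Q where "Q = smult (1 / (real m + 1)) (pderiv P)"
  have dQ: "degree Q = m" using Suc.prems unfolding Q_def by (simp add: degree_pderiv)
  have cQ: "coeff Q m = 1" using Suc.prems unfolding Q_def by (simp add: coeff_pderiv)
  have orthQ: "\<forall>k<m. Phi (a+1) (monom 1 k * Q) = 0"
  proof (intro allI impI)
    fix k assume k: "k < m"
    have "monom 1 k * Q = smult (1 / ((real k + 1) * (real m + 1))) (pderiv (monom 1 (Suc k)) * pderiv P)"
    proof -
      have "pderiv (monom 1 (Suc k)) = smult (real k + 1) (monom (1::real) k)"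
        by (simp add: pderiv_monom smult_monom)
      moreover have "1 / ((real k + 1) * (real m + 1)) * (real k + 1) = 1 / (real m + 1)" by simp
      ultimately show ?thesis unfolding Q_def by (simp add: mult_smult_left mult_smult_right)
    qed
    then have "Phi (a+1) (monom 1 k * Q) = 1 / ((real k + 1) * (real m + 1)) * Phi a (Lop a (monom 1 (Suc k)) * P)"
      by (simp add: Phi_smult F1[OF Suc.prems(1)])
    also have "Phi a (Lop a (monom 1 (Suc k)) * P) = 0"
      using Suc.prems(4) lowdeg_Lop_monom[of "Suc k" "Suc m" a] k by (intro ORTH) auto
    finally show "Phi (a+1) (monom 1 k * Q) = 0" by simp
  qed
  have IH: "Phi (a+1) (Q*Q) = H (a+1) m"
    using Suc.IH[of "a+1" Q] Suc.prems(1) dQ cQ orthQ by auto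
  have pd: "pderiv P = smult (real m + 1) Q" unfolding Q_def by simp
  have "Phi a (Lop a P * P) = (real m + 1)^2 * H (a+1) m"
    using F1[OF Suc.prems(1), of P P] IH unfolding pd
    by (simp add: Phi_smult mult_smult_left mult_smult_right power2_eq_square)
  moreover have "Phi a (Lop a P * P) = lam a (Suc m) * Phi a (P * P)"
  proof -
    define R where "R = Lop a P - smult (lam a (Suc m)) P"
    have "Lop a P = smult (lam a (Suc m)) P + R" unfolding R_def by simp
    moreover have "Phi a (R * P) = 0"
      using Suc.prems(4) lowdeg_Lop_diff[OF Suc.prems(2), of a] unfolding R_def by (intro ORTH) auto
    ultimately show ?thesis by (simp add: distrib_right Phi_add Phi_smult mult_smult_left)
  qed
  moreover have "lam a (Suc m) = (real m + 1) * (real m + 2*a + 2)" by (simp add: lam_def algebra_simps)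
  ultimately have "(real m + 1) * ((real m + 1) * H (a+1) m) = (real m + 1) * ((real m + 2*a + 2) * Phi a (P * P))"
    by (simp add: power2_eq_square mult_ac)
  then have "(real m + 1) * H (a+1) m = (real m + 2*a + 2) * Phi a (P * P)" by simp
  moreover have "real m + 2*a + 2 > 0" using Suc.prems(1) by linarith
  ultimately show ?case by (simp add: field_simps)
qed


locale onb =
  fixes a :: real and c :: "nat \<Rightarrow> real poly"
  assumes a: "a > -1"
    and deg: "\<And>n. degree (c n) = n"
    and lc: "\<And>n. lead_coeff (c n) > 0"
    and on: "\<And>n m. Phi a (c n * c m) = (if n = m then 1 else 0)"
begin

lemma expand: "lowdeg N q \<Longrightarrow> q = (\<Sum>i<N. smult (Phi a (q * c i)) (c i))"
proof (induction N arbitrary: q)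
  case 0
  then show ?case by (auto simp: lowdeg_def intro: poly_eqI)
next
  case (Suc N)
  define t where "t = coeff q N / lead_coeff (c N)"
  define q' where "q' = q - smult t (c N)"
  have lcN: "coeff (c N) N = lead_coeff (c N)" using deg[of N] by simp
  have "lowdeg N q'"
    unfolding lowdeg_def
  proof (intro allI impI)
    fix k assume k: "N \<le> k"
    show "coeff q' k = 0"
    proof (cases "k = N")
      case True
      have "c N \<noteq> 0" using lc[of N] by auto
      then show ?thesis using True unfolding q'_def t_def by (simp add: lcN)
    next
      case False
      then have "coeff (c N) k = 0" using k deg[of N] by (intro coeff_eq_0) auto
      moreover have "coeff q k = 0" using Suc.prems False k by (auto simp: lowdeg_def)
      ultimately show ?thesis unfolding q'_def by simp
    qed
  qed
  note IH = Suc.IH[OF this]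
  have q: "q = q' + smult t (c N)" unfolding q'_def by simp
  have P1: "Phi a (q * c i) = Phi a (q' * c i)" if "i < N" for i
    using that by (simp add: q distrib_right Phi_add mult_smult_left Phi_smult on)
  have "Phi a (q' * c N) = (\<Sum>i<N. Phi a (q' * c i) * Phi a (c i * c N))"
    by (subst IH) (simp add: sum_distrib_right mult_smult_left Phi_sum Phi_smult)
  also have "\<dots> = 0" by (simp add: on)
  finally have P2: "Phi a (q * c N) = t"
    by (simp add: q distrib_right Phi_add mult_smult_left Phi_smult on)
  have "(\<Sum>i<Suc N. smult (Phi a (q * c i)) (c i)) = (\<Sum>i<N. smult (Phi a (q' * c i)) (c i)) + smult t (c N)"
    by (simp add: P1 P2)
  also have "\<dots> = q" using IH q by simp
  finally show ?case by simp
qed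

lemma orth_c: "lowdeg n q \<Longrightarrow> Phi a (q * c n) = 0"
proof -
  assume "lowdeg n q"
  then have "Phi a (q * c n) = (\<Sum>i<n. Phi a (q * c i) * Phi a (c i * c n))"
    by (subst expand[of n q]) (simp_all add: sum_distrib_right mult_smult_left Phi_sum Phi_smult)
  also have "\<dots> = 0" by (simp add: on)
  finally show ?thesis .
qed

lemma lowdeg_deg: "degree p < n \<Longrightarrow> lowdeg n p"
  by (auto simp: lowdeg_def intro: coeff_eq_0)

lemma lowdeg_Lop: assumes "degree p < n" shows "lowdeg n (Lop a p)"
  unfolding lowdeg_def
proof (intro allI impI)
  fix k assume "n \<le> k"
  then have "coeff p k = 0" "coeff p (k+2) = 0" using assms by (auto intro!: coeff_eq_0)
  then show "coeff (Lop a p) k = 0" by (simp add: coeff_Lop)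
qed

lemma eigen: "Lop a (c n) = smult (lam a n) (c n)"
proof -
  define D where "D = Lop a (c n) - smult (lam a n) (c n)"
  have ld: "lowdeg n D" unfolding D_def by (rule lowdeg_Lop_diff[OF deg])
  have "Phi a (D * c i) = 0" if "i < n" for i
  proof -
    have "Phi a (D * c i) = Phi a (Lop a (c n) * c i) - lam a n * Phi a (c n * c i)"
      unfolding D_def by (simp add: left_diff_distrib Phi_diff mult_smult_left Phi_smult)
    also have "Phi a (Lop a (c n) * c i) = Phi a (Lop a (c i) * c n)"
      using Lop_sym[OF a, of "c n" "c i"] by (simp add: mult.commute)
    also have "\<dots> = 0" using that deg[of i] by (intro orth_c lowdeg_Lop) auto
    finally show ?thesis using that by (simp add: on)
  qed
  then have "D = 0" by (subst expand[OF ld]) simp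
  then show ?thesis unfolding D_def by simp
qed

lemma lc_H: "(lead_coeff (c n))^2 * H a n = 1"
proof -
  define l where "l = lead_coeff (c n)"
  have l0: "l > 0" unfolding l_def using lc .
  define P where "P = smult (1/l) (c n)"
  have "degree P = n" unfolding P_def using l0 deg[of n] by simp
  moreover have "coeff P n = 1" unfolding P_def l_def using deg[of n] lc[of n] by simp
  moreover have "\<forall>k<n. Phi a (monom 1 k * P) = 0"
    unfolding P_def by (auto simp: mult_smult_right Phi_smult intro!: orth_c lowdeg_deg
       intro: le_less_trans[OF degree_monom_le])
  ultimately have "Phi a (P * P) = H a n" by (intro monic_norm a)
  moreover have "Phi a (P * P) = 1 / l^2"
    unfolding P_def by (simp add: mult_smult_left mult_smult_right Phi_smult on power2_eq_square)
  ultimately have e: "H a n = 1 / l^2" by simp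
  show ?thesis unfolding l_def[symmetric] e using l0 by simp
qed

lemma coeff_rec: "(lam a n - lam a k) * coeff (c n) k = - ((real k + 2) * (real k + 1)) * coeff (c n) (k+2)"
proof -
  have "coeff (Lop a (c n)) k = coeff (smult (lam a n) (c n)) k" by (simp add: eigen)
  then show ?thesis unfolding coeff_Lop by (simp add: lam_def algebra_simps)
qed

lemma lam_diff: "lam a n - lam a s = (real n - real s) * (real n + real s + 2*a + 1)"
  by (simp add: lam_def algebra_simps)

lemma lam_diff_ne: "s < n \<Longrightarrow> lam a n - lam a s \<noteq> 0"
  unfolding lam_diff using a by (auto simp: add_pos_pos)

lemma coeff_odd: "k + 2*i + 1 = n \<Longrightarrow> coeff (c n) k = 0"
proof (induction i arbitrary: k)
  case 0
  have "coeff (c n) (k+2) = 0" using 0 deg[of n] by (intro coeff_eq_0) auto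
  then show ?case using coeff_rec[of n k] lam_diff_ne[of k n] 0 by simp
next
  case (Suc i)
  then have "coeff (c n) (k+2) = 0" by (intro Suc.IH) simp
  then show ?case using coeff_rec[of n k] lam_diff_ne[of k n] Suc.prems by simp
qed

definition g :: "nat \<Rightarrow> nat \<Rightarrow> real" where
  "g n s = - ((real s + 2) * (real s + 1)) / (lam a n - lam a s)"

lemma coeff_even: "k + 2*i = n \<Longrightarrow> coeff (c n) k = lead_coeff (c n) * (\<Prod>t<i. g n (k + 2*t))"
proof (induction i arbitrary: k)
  case 0
  then show ?case using deg[of n] by simp
next
  case (Suc i)
  then have IH: "coeff (c n) (k+2) = lead_coeff (c n) * (\<Prod>t<i. g n (k + 2 + 2*t))" by (intro Suc.IH) simp
  have "coeff (c n) k = g n k * coeff (c n) (k+2)"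
    using coeff_rec[of n k] lam_diff_ne[of k n] Suc.prems unfolding g_def by (simp add: field_simps)
  also have "\<dots> = lead_coeff (c n) * (\<Prod>t<Suc i. g n (k + 2*t))"
    unfolding IH prod.lessThan_Suc_shift by (simp add: algebra_simps)
  finally show ?case .
qed

end


lemma w_meas[measurable]: "geg_weight a \<in> borel_measurable borel"
  unfolding geg_weight_def by measurable

lemma w_nonneg: "geg_weight a x \<ge> 0" unfolding geg_weight_def by simp

lemma w_even: "geg_weight a (-x) = geg_weight a x" unfolding geg_weight_def by simp

lemma mom_integrable:
  assumes "set_integrable lborel {-1<..<1::real} (geg_weight a)"
  shows "set_integrable lborel {-1<..<1::real} (\<lambda>x. x^k * geg_weight a x)"
  unfolding set_integrable_def
proof (rule Bochner_Integration.integrable_bound)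
  show "integrable lborel (\<lambda>x. indicator {-1<..<1::real} x *\<^sub>R geg_weight a x)"
    using assms unfolding set_integrable_def .
  show "(\<lambda>x. indicator {-1<..<1::real} x *\<^sub>R (x ^ k * geg_weight a x)) \<in> borel_measurable lborel"
    by measurable
  show "AE x in lborel. norm (indicator {-1<..<1::real} x *\<^sub>R (x ^ k * geg_weight a x))
          \<le> norm (indicator {-1<..<1::real} x *\<^sub>R geg_weight a x)"
  proof (rule AE_I2)
    fix x :: real
    show "norm (indicator {-1<..<1::real} x *\<^sub>R (x ^ k * geg_weight a x))
          \<le> norm (indicator {-1<..<1::real} x *\<^sub>R geg_weight a x)"
    proof (cases "x \<in> {-1<..<1}")
      case True
      then have "\<bar>x\<bar> ^ k \<le> 1" by (intro power_le_one) auto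
      then have "\<bar>x\<bar> ^ k * geg_weight a x \<le> 1 * geg_weight a x"
        by (intro mult_right_mono w_nonneg)
      then show ?thesis using True w_nonneg[of a x] by (simp add: abs_mult power_abs)
    qed simp
  qed
qed

lemma mom_odd_zero:
  assumes "odd k"
  shows "(LINT x:{-1<..<1::real}|lborel. x^k * geg_weight a x) = 0"
proof -
  define G where "G x = indicator {-1<..<1::real} x *\<^sub>R (x^k * geg_weight a x)" for x
  have GG: "G (0 + (-1) * x) = - G x" for x
    using assms unfolding G_def by (auto simp: w_even indicator_def)
  have "integral\<^sup>L lborel G = \<bar>-1\<bar> *\<^sub>R integral\<^sup>L lborel (\<lambda>x. G (0 + (-1) * x))"
    by (rule lborel_integral_real_affine) simp
  also have "\<dots> = - integral\<^sup>L lborel G" unfolding GG by simp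
  finally have "integral\<^sup>L lborel G = 0" by simp
  then show ?thesis unfolding set_lebesgue_integral_def G_def .
qed

lemma mom_even:
  assumes a: "a > -1" and wi: "set_integrable lborel {-1<..<1::real} (geg_weight a)"
  shows "(LINT x:{-1<..<1::real}|lborel. x^(2*m) * geg_weight a x) = Beta (real m + 1/2) (a+1)"
proof -
  define f where "f x = x^(2*m) * geg_weight a x" for x :: real
  have fi: "set_integrable lborel {-1<..<1::real} f"
    unfolding f_def using mom_integrable[OF wi] .
  have fm[measurable]: "f \<in> borel_measurable borel" unfolding f_def by measurable
  have fe: "f (-x) = f x" for x unfolding f_def by (simp add: w_even)
  have i1: "set_integrable lborel {-1<..<0::real} f" by (rule set_integrable_subset[OF fi]) auto
  have i2: "set_integrable lborel {0..<1::real} f" by (rule set_integrable_subset[OF fi]) auto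
  have "(LINT x:{-1<..<1}|lborel. f x) = (LINT x:{-1<..<0}|lborel. f x) + (LINT x:{0..<1}|lborel. f x)"
  proof -
    have "{-1<..<1::real} = {-1<..<0} \<union> {0..<1}" by auto
    moreover have d: "{-1<..<0::real} \<inter> {0..<1} = {}" by auto
    ultimately show ?thesis using set_integral_Un[OF d i1 i2] by simp
  qed
  also have "(LINT x:{-1<..<0}|lborel. f x) = (LINT x:{0<..<1}|lborel. f x)"
  proof -
    define G where "G x = indicator {-1<..<0::real} x *\<^sub>R f x" for x
    have GG: "G (0 + (-1) * x) = indicator {0<..<1::real} x *\<^sub>R f x" for x
      unfolding G_def by (auto simp: fe indicator_def)
    have "integral\<^sup>L lborel G = \<bar>-1\<bar> *\<^sub>R integral\<^sup>L lborel (\<lambda>x. G (0 + (-1) * x))"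
      by (rule lborel_integral_real_affine) simp
    also have "(\<lambda>x. G (0 + (-1) * x)) = (\<lambda>x. indicator {0<..<1::real} x *\<^sub>R f x)"
      using GG by auto
    finally show ?thesis unfolding set_lebesgue_integral_def G_def by simp
  qed
  also have "(LINT x:{0<..<1}|lborel. f x) = (LINT x:{0..1}|lborel. f x)"
  proof (rule set_integral_cong_set[symmetric])
    show "AE x in lborel. (x \<in> {0<..<1::real}) = (x \<in> {0..1})"
      by (rule eventually_mono[OF eventually_conj[OF AE_lborel_singleton[of 0] AE_lborel_singleton[of 1]]]) auto
  qed (unfold set_borel_measurable_def, measurable)+
  also have "(LINT x:{0..<1}|lborel. f x) = (LINT x:{0..1}|lborel. f x)"
  proof (rule set_integral_cong_set[symmetric])
    show "AE x in lborel. (x \<in> {0..<1::real}) = (x \<in> {0..1})"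
      by (rule eventually_mono[OF eventually_conj[OF AE_lborel_singleton[of 0] AE_lborel_singleton[of 1]]]) auto
  qed (unfold set_borel_measurable_def, measurable)+
  finally have S: "(LINT x:{-1<..<1}|lborel. f x) = 2 * (LINT x:{0..1}|lborel. f x)" by simp
  define f' where "f' t = t powr (real m + 1/2 - 1) * (1 - t) powr (a + 1 - 1)" for t :: real
  have bi: "set_integrable lborel {0..1::real} f'"
    unfolding f'_def by (rule integrable_Beta) (use a in auto)
  have sub: "(LBINT x. f' x * indicator {(0::real)^2..1^2} x) =
        (LBINT x. f' (x^2) * (2*x) * indicator {0..1} x)"
    by (rule integral_substitution(2)[where g="\<lambda>x. x^2" and g'="\<lambda>x. 2*x" and a=0 and b=1 and f=f'])
       (use bi in \<open>auto intro!: derivative_eq_intros continuous_intros\<close>)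
  have "(LBINT x. f' x * indicator {(0::real)^2..1^2} x) = (LINT x:{0..1}|lborel. f' x)"
    unfolding set_lebesgue_integral_def by (simp add: mult.commute)
  also have "\<dots> = integral {0..1} f'" by (rule set_borel_integral_eq_integral(2)[OF bi])
  also have "\<dots> = Beta (real m + 1/2) (a+1)"
    unfolding f'_def by (rule integral_unique, rule has_integral_Beta_real) (use a in auto)
  finally have B1: "(LBINT x. f' (x^2) * (2*x) * indicator {0..1} x) = Beta (real m + 1/2) (a+1)"
    using sub by simp
  have "(LBINT x. f' (x^2) * (2*x) * indicator {0..1} x) = (LBINT x. 2 * (indicator {0..1::real} x *\<^sub>R f x))"
  proof (rule integral_cong_AE)
    show "(\<lambda>x. f' (x^2) * (2*x) * indicator {0..1::real} x) \<in> borel_measurable lborel"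
      unfolding f'_def by measurable
    show "(\<lambda>x. 2 * (indicator {0..1::real} x *\<^sub>R f x)) \<in> borel_measurable lborel" by measurable
    show "AE x in lborel. f' (x^2) * (2*x) * indicator {0..1} x = 2 * (indicator {0..1::real} x *\<^sub>R f x)"
    proof (rule eventually_mono[OF AE_lborel_singleton[of 0]])
      fix x :: real assume x: "x \<noteq> 0"
      show "f' (x^2) * (2*x) * indicator {0..1} x = 2 * (indicator {0..1::real} x *\<^sub>R f x)"
      proof (cases "x \<in> {0..1}")
        case True
        then have xp: "x > 0" using x by auto
        have "(x^2) powr (real m + 1/2 - 1) * x = x ^ (2*m)"
        proof -
          have x2: "x^2 = x powr 2" using xp by (simp add: powr_realpow)
          have "(x^2) powr (real m + 1/2 - 1) = x powr (2 * (real m + 1/2 - 1))"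
            unfolding x2 by (simp add: powr_powr)
          also have "2 * (real m + 1/2 - 1) = 2*real m - 1" by simp
          finally have "(x^2) powr (real m + 1/2 - 1) * x = x powr (2*real m - 1) * x powr 1"
            using xp by simp
          also have "\<dots> = x powr (2*real m - 1 + 1)" by (rule powr_add[symmetric])
          also have "\<dots> = x powr (2*real m)" by simp
          also have "\<dots> = x powr (real (2*m))" by simp
          also have "\<dots> = x ^ (2*m)" using xp by (rule powr_realpow)
          finally show ?thesis .
        qed
        then show ?thesis using True unfolding f'_def f_def geg_weight_def
          by (simp add: mult_ac)
      qed simp
    qed
  qed
  also have "\<dots> = 2 * (LINT x:{0..1}|lborel. f x)"
    unfolding set_lebesgue_integral_def by simp
  finally show ?thesis using S B1 unfolding f_def by simp
qed


lemma mom_value: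
  assumes a: "a > -1" and wi: "set_integrable lborel {-1<..<1::real} (geg_weight a)"
  shows "(LINT x:{-1<..<1::real}|lborel. x^k * geg_weight a x) = mom a k"
proof (cases "even k")
  case True
  then obtain m where k: "k = 2*m" by blast
  show ?thesis unfolding k mom_def using mom_even[OF a wi, of m] by simp
next
  case False
  then show ?thesis using mom_odd_zero[OF False] by (simp add: mom_def)
qed

lemma poly_integral:
  assumes a: "a > -1" and wi: "set_integrable lborel {-1<..<1::real} (geg_weight a)"
  shows "(LINT x:{-1<..<1::real}|lborel. poly p x * geg_weight a x) = Phi a p"
proof -
  have "(LINT x:{-1<..<1::real}|lborel. poly p x * geg_weight a x)
      = integral\<^sup>L lborel (\<lambda>x. \<Sum>i\<le>degree p. coeff p i * (indicator {-1<..<1::real} x *\<^sub>R (x^i * geg_weight a x)))"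
    unfolding set_lebesgue_integral_def poly_altdef
    by (intro Bochner_Integration.integral_cong refl) (simp add: sum_distrib_left sum_distrib_right mult_ac)
  also have "\<dots> = (\<Sum>i\<le>degree p. coeff p i * (LINT x:{-1<..<1::real}|lborel. x^i * geg_weight a x))"
    unfolding set_lebesgue_integral_def
    using mom_integrable[OF wi] unfolding set_integrable_def
    by (subst Bochner_Integration.integral_sum) auto
  also have "\<dots> = Phi a p" unfolding Phi_def by (simp add: mom_value[OF a wi])
  finally show ?thesis .
qed

lemma onb_from_hyp:
  assumes a: "a > -1" and h: "orthonormal_gegenbauer a c"
  shows "onb a c"
proof -
  have deg: "\<And>n. degree (c n) = n" and lc: "\<And>n. lead_coeff (c n) > 0"
    using h unfolding orthonormal_gegenbauer_def by blast+
  define \<gamma> where "\<gamma> = lead_coeff (c 0)"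
  have g0: "\<gamma> > 0" unfolding \<gamma>_def using lc .
  have c0: "c 0 = [:\<gamma>:]" unfolding \<gamma>_def using deg[of 0] by (metis degree_0_id)
  have "set_integrable lborel {-1<..<1::real} (\<lambda>x. poly (c 0) x * poly (c 0) x * geg_weight a x)"
    using h unfolding orthonormal_gegenbauer_def by blast
  then have "set_integrable lborel {-1<..<1::real} (\<lambda>x. (\<gamma> * \<gamma>) * geg_weight a x)"
    unfolding c0 by simp
  then have wi: "set_integrable lborel {-1<..<1::real} (geg_weight a)"
    using g0 by (subst (asm) set_integrable_mult_right_iff) auto
  show ?thesis
  proof
    show "a > -1" by (fact a)
    show "degree (c n) = n" for n by (fact deg)
    show "lead_coeff (c n) > 0" for n by (fact lc)
    fix n m
    have "Phi a (c n * c m) = (LINT x:{-1<..<1::real}|lborel. poly (c n * c m) x * geg_weight a x)"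
      by (rule poly_integral[OF a wi, symmetric])
    also have "\<dots> = (if n = m then 1 else 0)"
      using h unfolding orthonormal_gegenbauer_def by simp
    finally show "Phi a (c n * c m) = (if n = m then 1 else 0)" .
  qed
qed


lemma pos_not_nonpos_Int: "(x::real) > 0 \<Longrightarrow> x \<notin> \<int>\<^sub>\<le>\<^sub>0"
  using nonpos_Ints_nonpos by fastforce

lemma dup_real:
  assumes "(x::real) > 0"
  shows "Gamma x * Gamma (x + 1/2) = 2 powr (1 - 2*x) * sqrt pi * Gamma (2*x)"
proof -
  have "Gamma (complex_of_real x) * Gamma (complex_of_real x + 1/2) =
        exp ((1 - 2*complex_of_real x) * of_real (ln 2)) * of_real (sqrt pi) * Gamma (2*complex_of_real x)"
    using assms by (intro Gamma_legendre_duplication) (auto simp: nonpos_Ints_def complex_eq_iff)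
  also have "Gamma (complex_of_real x) = of_real (Gamma x)" by (simp add: Gamma_complex_of_real)
  also have "Gamma (complex_of_real x + 1/2) = of_real (Gamma (x + 1/2))"
  proof -
    have "complex_of_real x + 1/2 = complex_of_real (x + 1/2)" by simp
    then show ?thesis by (simp only: Gamma_complex_of_real)
  qed
  also have "Gamma (2*complex_of_real x) = of_real (Gamma (2*x))"
  proof -
    have "2 * complex_of_real x = complex_of_real (2 * x)" by simp
    then show ?thesis by (simp only: Gamma_complex_of_real)
  qed
  also have "exp ((1 - 2*complex_of_real x) * of_real (ln 2)) = of_real (exp ((1 - 2*x) * ln 2))"
  proof -
    have "(1 - 2*complex_of_real x) * of_real (ln 2) = complex_of_real ((1 - 2*x) * ln 2)" by simp
    then show ?thesis by (simp only: exp_of_real)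
  qed
  finally have "complex_of_real (Gamma x * Gamma (x + 1/2)) = complex_of_real (exp ((1 - 2*x) * ln 2) * sqrt pi * Gamma (2*x))"
    by simp
  then have "Gamma x * Gamma (x + 1/2) = exp ((1 - 2*x) * ln 2) * sqrt pi * Gamma (2*x)"
    using of_real_eq_iff by blast
  also have "exp ((1 - 2*x) * ln 2) = 2 powr (1 - 2*x)" by (simp add: powr_def)
  finally show ?thesis .
qed

lemma GA0:
  assumes w: "(w::real) > 0"
  shows "(\<lambda>m. Gamma (real m + 1 + w) / (fact m * real m powr w)) \<longlonglongrightarrow> 1"
proof -
  have gw: "Gamma w > 0" using w by (rule Gamma_real_pos)
  have "(\<lambda>m. Gamma w / Gamma_series w m) \<longlonglongrightarrow> Gamma w / Gamma w"
    by (intro tendsto_intros Gamma_series_LIMSEQ) (use gw in auto)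
  then have L: "(\<lambda>m. Gamma w / Gamma_series w m) \<longlonglongrightarrow> 1" using gw by simp
  show ?thesis
  proof (rule Lim_transform_eventually[OF L])
    show "\<forall>\<^sub>F m in sequentially. Gamma w / Gamma_series w m = Gamma (real m + 1 + w) / (fact m * real m powr w)"
      using eventually_gt_at_top[of "0::nat"]
    proof eventually_elim
      case (elim m)
      have p: "pochhammer w (m+1) = Gamma (w + real (m+1)) / Gamma w"
        using pos_not_nonpos_Int[OF w] by (rule pochhammer_Gamma)
      have e: "exp (w * of_real (ln (real m))) = real m powr w" unfolding powr_def using elim by simp
      have g1: "Gamma (real m + 1 + w) > 0" using w by (intro Gamma_real_pos) auto
      show ?case unfolding Gamma_series_def p e using gw g1 elim
        by (simp add: field_simps add_ac)
    qed
  qed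
qed

lemma GA:
  assumes z: "(z::real) > -2"
  shows "(\<lambda>m. Gamma (real m + 1 + z) / (fact m * real m powr z)) \<longlonglongrightarrow> 1"
proof -
  have w: "z + 2 > 0" using z by simp
  note L0 = GA0[OF w]
  have L1: "(\<lambda>m. real m * real m / ((real m + z + 2) * (real m + z + 1))) \<longlonglongrightarrow> 1"
  proof -
    have "(\<lambda>m. (1::real) / ((1 + (z+2) / real m) * (1 + (z+1) / real m))) \<longlonglongrightarrow> 1 / ((1 + 0) * (1 + 0))"
      by (intro tendsto_intros tendsto_divide_0[OF tendsto_const] filterlim_real_sequentially) auto
    moreover have "\<forall>\<^sub>F m in sequentially. (1::real) / ((1 + (z+2) / real m) * (1 + (z+1) / real m))
       = real m * real m / ((real m + z + 2) * (real m + z + 1))"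
      using eventually_gt_at_top[of "0::nat"]
    proof eventually_elim
      case (elim m)
      have h1: "1 + (z+2) / real m = (real m + z + 2) / real m" using elim by (simp add: field_simps)
      have h2: "1 + (z+1) / real m = (real m + z + 1) / real m" using elim by (simp add: field_simps)
      show ?case by (simp only: h1 h2 times_divide_times_eq) simp
    qed
    ultimately show ?thesis by (simp add: tendsto_cong)
  qed
  have "(\<lambda>m. Gamma (real m + 1 + (z+2)) / (fact m * real m powr (z+2)) *
          (real m * real m / ((real m + z + 2) * (real m + z + 1)))) \<longlonglongrightarrow> 1 * 1"
    by (intro tendsto_mult L0 L1)
  then have lim: "(\<lambda>m. Gamma (real m + 1 + (z+2)) / (fact m * real m powr (z+2)) *
          (real m * real m / ((real m + z + 2) * (real m + z + 1)))) \<longlonglongrightarrow> 1" by simp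
  show ?thesis
  proof (rule Lim_transform_eventually[OF lim])
    have ev: "\<forall>\<^sub>F m in sequentially. real m > - 1 - z \<and> m > 0"
      using eventually_gt_at_top[of "nat \<lceil>-1 - z\<rceil>"] eventually_gt_at_top[of "0::nat"]
      by eventually_elim linarith
    show "\<forall>\<^sub>F m in sequentially. Gamma (real m + 1 + (z+2)) / (fact m * real m powr (z+2)) *
          (real m * real m / ((real m + z + 2) * (real m + z + 1))) = Gamma (real m + 1 + z) / (fact m * real m powr z)"
      using ev
    proof eventually_elim
      case (elim m)
      have p1: "real m + 1 + z > 0" using elim by linarith
      have G2: "Gamma (real m + 1 + (z+2)) = (real m + 1 + z + 1) * ((real m + 1 + z) * Gamma (real m + 1 + z))"
      proof -
        have "Gamma (real m + 1 + (z+2)) = Gamma ((real m + 1 + z + 1) + 1)" by (simp add: add_ac)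
        also have "\<dots> = (real m + 1 + z + 1) * Gamma (real m + 1 + z + 1)"
          using p1 by (intro Gamma_plus1 pos_not_nonpos_Int) auto
        also have "Gamma (real m + 1 + z + 1) = (real m + 1 + z) * Gamma (real m + 1 + z)"
          using p1 by (intro Gamma_plus1 pos_not_nonpos_Int) auto
        finally show ?thesis .
      qed
      have pw: "real m powr (z+2) = real m powr z * (real m * real m)"
        using elim by (simp add: powr_add power2_eq_square)
      have G2': "Gamma (real m + 1 + (z+2)) = ((real m + z + 2) * (real m + z + 1)) * Gamma (real m + 1 + z)"
        unfolding G2 by (simp add: algebra_simps)
      have aux: "A * G / (F * (P * B)) * (B / A) = G / (F * P)" if "A \<noteq> 0" "B \<noteq> 0" for A B G F P :: real
        using that by (simp add: field_simps)
      have "(real m + z + 2) * (real m + z + 1) \<noteq> 0" using p1 by (simp add: add_pos_pos)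
      moreover have "real m * real m \<noteq> 0" using elim by simp
      ultimately show ?case unfolding G2' pw by (rule aux)
    qed
  qed
qed


lemma bern1: "(x::real) \<ge> 0 \<Longrightarrow> x^(Suc p) + real (Suc p) * x^p \<le> (x+1)^(Suc p)"
proof (induction p)
  case 0 then show ?case by simp
next
  case (Suc p)
  have "(x+1)^(Suc (Suc p)) = (x+1) * (x+1)^(Suc p)" by simp
  also have "\<dots> \<ge> (x+1) * (x^(Suc p) + real (Suc p) * x^p)"
    using Suc by (intro mult_left_mono) auto
  finally have "(x+1)^(Suc (Suc p)) \<ge> x^Suc (Suc p) + real (Suc (Suc p)) * x^(Suc p) + real (Suc p) * x^p"
    by (simp add: algebra_simps)
  moreover have "real (Suc p) * x^p \<ge> 0" using Suc by simp
  ultimately show ?case by linarith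
qed

lemma bern2: "(x::real) \<ge> 0 \<Longrightarrow> (x+1)^(Suc p) - x^(Suc p) \<le> real (Suc p) * (x+1)^p"
proof (induction p)
  case 0 then show ?case by simp
next
  case (Suc p)
  have "(x+1)^(Suc (Suc p)) - x^(Suc (Suc p)) = (x+1)^(Suc p) + x * ((x+1)^(Suc p) - x^(Suc p))"
    by (simp add: algebra_simps)
  also have "\<dots> \<le> (x+1)^(Suc p) + x * (real (Suc p) * (x+1)^p)"
    using Suc by (intro add_left_mono mult_left_mono) auto
  also have "\<dots> \<le> (x+1)^(Suc p) + (x+1) * (real (Suc p) * (x+1)^p)"
    using Suc by (intro add_left_mono mult_right_mono) auto
  also have "\<dots> = real (Suc (Suc p)) * (x+1)^(Suc p)" by (simp add: algebra_simps)
  finally show ?case .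
qed

lemma psum_upper: "(\<Sum>l<n. real l ^ p) \<le> real n ^ Suc p / real (Suc p)"
proof (induction n)
  case 0 then show ?case by simp
next
  case (Suc n)
  have "(\<Sum>l<Suc n. real l ^ p) = (\<Sum>l<n. real l ^ p) + real n ^ p" by simp
  also have "\<dots> \<le> real n ^ Suc p / real (Suc p) + real n ^ p" using Suc by simp
  also have "\<dots> = (real n ^ Suc p + real (Suc p) * real n ^ p) / real (Suc p)"
    by (simp add: field_simps)
  also have "\<dots> \<le> (real n + 1) ^ Suc p / real (Suc p)"
    using bern1[of "real n" p] by (intro divide_right_mono) auto
  finally show ?case by (simp add: add.commute)
qed

lemma psum_lower: "real n ^ Suc p / real (Suc p) - real n ^ p \<le> (\<Sum>l<n. real l ^ p)"
proof (induction n)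
  case 0 then show ?case by (cases p) simp_all
next
  case (Suc n)
  have "((real n + 1) ^ Suc p - real n ^ Suc p) / real (Suc p) \<le> real (Suc p) * (real n + 1) ^ p / real (Suc p)"
    using bern2[of "real n" p] by (intro divide_right_mono) auto
  then have "(real n + 1) ^ Suc p / real (Suc p) - (real n + 1) ^ p \<le> real n ^ Suc p / real (Suc p)"
    by (simp add: diff_divide_distrib)
  also have "\<dots> \<le> (\<Sum>l<n. real l ^ p) + real n ^ p" using Suc by simp
  also have "\<dots> = (\<Sum>l<Suc n. real l ^ p)" by simp
  finally show ?case by (simp add: add.commute)
qed

lemma psum_lim: "(\<lambda>n. (\<Sum>l<n. real l ^ p) / real n ^ Suc p) \<longlonglongrightarrow> 1 / real (Suc p)"
proof (rule tendsto_sandwich)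
  show "\<forall>\<^sub>F n in sequentially. 1 / real (Suc p) - 1 / real n \<le> (\<Sum>l<n. real l ^ p) / real n ^ Suc p"
    using eventually_gt_at_top[of "0::nat"]
  proof eventually_elim
    case (elim n)
    have np: "real n ^ Suc p > 0" using elim by simp
    have q1: "real n ^ p / real n ^ Suc p = 1 / real n" using elim by simp
    have q2: "(real n ^ Suc p / real (Suc p)) / real n ^ Suc p = 1 / real (Suc p)" using np elim by simp
    have "1 / real (Suc p) - 1 / real n = (real n ^ Suc p / real (Suc p) - real n ^ p) / real n ^ Suc p"
      unfolding diff_divide_distrib q1 q2 ..
    also have "\<dots> \<le> (\<Sum>l<n. real l ^ p) / real n ^ Suc p"
      using psum_lower[of n p] np by (intro divide_right_mono) auto
    finally show ?case .
  qed
  show "\<forall>\<^sub>F n in sequentially. (\<Sum>l<n. real l ^ p) / real n ^ Suc p \<le> 1 / real (Suc p)"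
    using eventually_gt_at_top[of "0::nat"]
  proof eventually_elim
    case (elim n)
    have np: "real n ^ Suc p > 0" using elim by simp
    have "(\<Sum>l<n. real l ^ p) / real n ^ Suc p \<le> (real n ^ Suc p / real (Suc p)) / real n ^ Suc p"
      using psum_upper[where n=n and p=p] np by (intro divide_right_mono) auto
    also have "\<dots> = 1 / real (Suc p)" using np elim by simp
    finally show ?case .
  qed
  show "(\<lambda>n. 1 / real (Suc p) - 1 / real n) \<longlonglongrightarrow> 1 / real (Suc p)"
    using tendsto_diff[OF tendsto_const lim_1_over_n[where 'a=real]] by (simp add: inverse_eq_divide)
qed simp

lemma cesaro0:
  fixes b :: "nat \<Rightarrow> real"
  assumes b: "(\<lambda>l. b l / real l ^ p) \<longlonglongrightarrow> 0"
  shows "(\<lambda>n. (\<Sum>l<n. b l) / real n ^ Suc p) \<longlonglongrightarrow> 0"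
  unfolding LIMSEQ_iff
proof (intro allI impI)
  fix e :: real assume e: "e > 0"
  from b have "\<exists>L. \<forall>l\<ge>L. norm (b l / real l ^ p - 0) < e/2"
    unfolding LIMSEQ_iff using e by (meson half_gt_zero)
  then obtain L0 where L0: "\<forall>l\<ge>L0. \<bar>b l / real l ^ p\<bar> < e/2" by auto
  define L where "L = Suc L0"
  have bb: "\<bar>b l\<bar> \<le> e/2 * real l ^ p" if "l \<ge> L" for l
  proof -
    have lp: "real l ^ p > 0" using that unfolding L_def by simp
    have "\<bar>b l\<bar> / real l ^ p < e/2" using L0 that lp unfolding L_def by (simp add: abs_div)
    then show ?thesis using lp by (simp add: field_simps)
  qed
  define K where "K = (\<Sum>l<L. \<bar>b l\<bar>)"
  have K0: "K \<ge> 0" unfolding K_def by (simp add: sum_nonneg)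
  obtain N where N: "real N > 2 * K / e" using reals_Archimedean2 by blast
  show "\<exists>no. \<forall>n\<ge>no. norm ((\<Sum>l<n. b l) / real n ^ Suc p - 0) < e"
  proof (intro exI[of _ "max (Suc N) L"] allI impI)
    fix n assume n: "max (Suc N) L \<le> n"
    then have nL: "L \<le> n" and nN: "real n > 2 * K / e" using N by auto
    have n0: "real n > 0" using n by simp
    have "\<bar>\<Sum>l<n. b l\<bar> \<le> (\<Sum>l<n. \<bar>b l\<bar>)" by (rule sum_abs)
    also have "(\<Sum>l<n. \<bar>b l\<bar>) = K + (\<Sum>l\<in>{L..<n}. \<bar>b l\<bar>)"
      unfolding K_def using nL by (metis atLeast0LessThan sum.atLeastLessThan_concat zero_le)
    also have "(\<Sum>l\<in>{L..<n}. \<bar>b l\<bar>) \<le> (\<Sum>l\<in>{L..<n}. e/2 * real l ^ p)"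
      using bb by (intro sum_mono) auto
    also have "\<dots> \<le> (\<Sum>l<n. e/2 * real l ^ p)"
      using e by (intro sum_mono2) auto
    also have "\<dots> = e/2 * (\<Sum>l<n. real l ^ p)" by (simp add: sum_distrib_left)
    also have "\<dots> \<le> e/2 * (real n ^ Suc p / real (Suc p))"
      using e by (intro mult_left_mono psum_upper) auto
    also have "\<dots> \<le> e/2 * real n ^ Suc p"
      using e by (intro mult_left_mono) (auto simp: field_simps)
    finally have 1: "\<bar>\<Sum>l<n. b l\<bar> \<le> K + e/2 * real n ^ Suc p" by simp
    have np: "real n ^ Suc p > 0" using n0 by simp
    have nn: "real n \<le> real n ^ Suc p"
    proof -
      have "1 \<le> real n" using n by auto
      then have "1 \<le> real n ^ p" by (rule one_le_power)
      then show ?thesis using n0 by (simp add: mult_le_cancel_left1)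
    qed
    have "norm ((\<Sum>l<n. b l) / real n ^ Suc p - 0) = \<bar>\<Sum>l<n. b l\<bar> / real n ^ Suc p"
      by (simp add: abs_div)
    also have "\<dots> \<le> (K + e/2 * real n ^ Suc p) / real n ^ Suc p"
      using 1 np by (intro divide_right_mono) auto
    also have "\<dots> = K / real n ^ Suc p + e/2" using np n0 by (simp add: add_divide_distrib)
    also have "K / real n ^ Suc p \<le> K / real n"
      using K0 n0 nn by (intro divide_left_mono) auto
    also have "K / real n < e/2" using nN e n0 by (simp add: field_simps)
    finally show "norm ((\<Sum>l<n. b l) / real n ^ Suc p - 0) < e" by simp
  qed
qed

lemma cesaro:
  fixes a :: "nat \<Rightarrow> real"
  assumes a: "(\<lambda>l. a l / real l ^ p) \<longlonglongrightarrow> C"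
  shows "(\<lambda>n. (\<Sum>l<n. a l) / real n ^ Suc p) \<longlonglongrightarrow> C / real (Suc p)"
proof -
  define b where "b l = a l - C * real l ^ p" for l
  have "(\<lambda>l. a l / real l ^ p - C) \<longlonglongrightarrow> C - C" by (intro tendsto_intros a)
  moreover have "\<forall>\<^sub>F l in sequentially. a l / real l ^ p - C = b l / real l ^ p"
    using eventually_gt_at_top[of "0::nat"] by eventually_elim (simp add: b_def field_simps)
  ultimately have "(\<lambda>l. b l / real l ^ p) \<longlonglongrightarrow> 0" by (simp add: tendsto_cong)
  note B = cesaro0[OF this]
  have "(\<lambda>n. C * ((\<Sum>l<n. real l ^ p) / real n ^ Suc p) + (\<Sum>l<n. b l) / real n ^ Suc p)
         \<longlonglongrightarrow> C * (1 / real (Suc p)) + 0"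
    by (intro tendsto_intros psum_lim B)
  moreover have "(\<lambda>n. C * ((\<Sum>l<n. real l ^ p) / real n ^ Suc p) + (\<Sum>l<n. b l) / real n ^ Suc p)
      = (\<lambda>n. (\<Sum>l<n. a l) / real n ^ Suc p)"
    by (simp add: b_def sum_subtractf sum_distrib_left add_divide_distrib[symmetric] diff_divide_distrib)
  ultimately show ?thesis by simp
qed


lemma prod_num: "(\<Prod>t<i. (real (j+2*t) + 2) * (real (j+2*t) + 1)) = fact (j+2*i) / fact j"
proof (induction i)
  case 0 then show ?case by simp
next
  case (Suc i)
  have f: "fact (j + 2 * Suc i) = (real (j+2*i) + 2) * (real (j+2*i) + 1) * (fact (j+2*i) :: real)"
  proof -
    have "j + 2 * Suc i = Suc (Suc (j + 2*i))" by simp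
    then show ?thesis by (simp add: algebra_simps)
  qed
  show ?case unfolding prod.lessThan_Suc Suc f by (simp add: field_simps)
qed

lemma prod_it: "(\<Prod>t<i. real (i - t)) = fact i"
  by (simp add: fact_prod_rev atLeast0LessThan)

lemma H_closed: "H a n = fact n / pochhammer (real n + 2*a + 1) n * mom (a + real n) 0"
proof (induction n arbitrary: a)
  case 0 then show ?case by simp
next
  case (Suc m)
  have p: "pochhammer (real (Suc m) + 2*a + 1) (Suc m) = (real m + 2*a + 2) * pochhammer (real m + 2*(a+1) + 1) m"
    by (simp add: pochhammer_rec algebra_simps)
  show ?case unfolding H.simps Suc p by (simp add: field_simps)
qed

context onb
begin

definition T :: "nat \<Rightarrow> nat \<Rightarrow> real" where
  "T j i = (fact j * coeff (c (j+2*i)) j)^2"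

lemma g_formula:
  assumes "t < i"
  shows "g (j+2*i) (j+2*t) = - ((real (j+2*t) + 2) * (real (j+2*t) + 1)) /
            (4 * (real (i - t) * (real j + real i + a + 1/2 + real t)))"
proof -
  have d1: "real (j+2*i) - real (j+2*t) = 2 * real (i-t)" using assms by (simp add: of_nat_diff)
  have d2: "real (j+2*i) + real (j+2*t) + 2*a + 1 = 2*(real j + real i + a + 1/2 + real t)" by simp
  have "lam a (j+2*i) - lam a (j+2*t) = 4 * (real (i - t) * (real j + real i + a + 1/2 + real t))"
    unfolding lam_diff d1 d2 by simp
  then show ?thesis unfolding g_def by simp
qed

lemma prod_g:
  "(\<Prod>t<i. g (j+2*i) (j+2*t)) = (-1)^i * (fact (j+2*i) / fact j) /
      (4^i * fact i * pochhammer (real j + real i + a + 1/2) i)"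
proof -
  have "(\<Prod>t<i. g (j+2*i) (j+2*t)) = (\<Prod>t<i. (-1) * ((real (j+2*t) + 2) * (real (j+2*t) + 1)) /
            (4 * (real (i - t) * (real j + real i + a + 1/2 + real t))))"
    by (intro prod.cong refl) (simp add: g_formula)
  also have "\<dots> = (-1)^i * (\<Prod>t<i. (real (j+2*t) + 2) * (real (j+2*t) + 1)) /
            (4^i * ((\<Prod>t<i. real (i - t)) * (\<Prod>t<i. real j + real i + a + 1/2 + real t)))"
    by (simp only: prod_dividef prod.distrib prod_constant card_lessThan)
  also have "(\<Prod>t<i. real j + real i + a + 1/2 + real t) = pochhammer (real j + real i + a + 1/2) i"
    by (simp add: pochhammer_prod atLeast0LessThan)
  finally show ?thesis unfolding prod_num prod_it by (simp add: mult_ac)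
qed

lemma T_formula:
  "T j i = fact (j+2*i)^2 / (16^i * fact i^2 * pochhammer (real j + real i + a + 1/2) i ^ 2 * H a (j+2*i))"
proof -
  define n where "n = j + 2*i"
  have ce: "coeff (c n) j = lead_coeff (c n) * (\<Prod>t<i. g n (j + 2*t))"
    unfolding n_def by (rule coeff_even) simp
  have lh: "lead_coeff (c n) ^ 2 = 1 / H a n" using lc_H[of n]
    by (metis mult_not_zero nonzero_eq_divide_eq zero_neq_one mult.commute)
  have fj: "fact j \<noteq> (0::real)" by simp
  have "T j i = fact j ^ 2 * lead_coeff (c n) ^ 2 * (\<Prod>t<i. g n (j + 2*t)) ^ 2"
    unfolding T_def n_def[symmetric] ce by (simp add: power_mult_distrib)
  also have "\<dots> = fact j ^ 2 * lead_coeff (c n) ^ 2 * ((fact n / fact j) / (4^i * fact i * pochhammer (real j + real i + a + 1/2) i)) ^ 2"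
    unfolding n_def prod_g by (simp add: power_mult_distrib power_divide power_mult[symmetric] mult.commute[of _ 2])
  also have "\<dots> = lead_coeff (c n) ^ 2 * (fact n ^ 2 / (16^i * fact i^2 * pochhammer (real j + real i + a + 1/2) i ^ 2))"
  proof -
    have h16: "(4::real) ^ (i*2) = 16 ^ i" by (simp only: mult.commute[of i 2] power_mult) simp
    show ?thesis using fj by (simp add: field_simps power_mult_distrib h16 flip: power_mult)
  qed
  also have "\<dots> = fact n ^ 2 / (16^i * fact i^2 * pochhammer (real j + real i + a + 1/2) i ^ 2 * H a n)"
    unfolding lh by simp
  finally show ?thesis unfolding n_def .
qed

lemma H_gamma:
  assumes n: "n \<ge> 1"
  defines "b \<equiv> a + 1/2"
  shows "H a n = fact n * Gamma (real n + 2*b) * pi * 2 powr (1 - 2*(real n + b)) / ((real n + b) * Gamma (real n + b)^2)"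
proof -
  have b: "b > -1/2" using a unfolding b_def by simp
  have nb: "real n + b > 0" using n b by linarith
  have n2b: "real n + 2*b > 0" using n b by linarith
  have p: "pochhammer (real n + 2*a + 1) n = Gamma (real n + 2*b + real n) / Gamma (real n + 2*b)"
  proof -
    have "real n + 2*a + 1 = real n + 2*b" unfolding b_def by simp
    then have "pochhammer (real n + 2*a + 1) n = pochhammer (real n + 2*b) n" by (simp only:)
    also have "\<dots> = Gamma (real n + 2*b + real n) / Gamma (real n + 2*b)"
      by (rule pochhammer_Gamma[OF pos_not_nonpos_Int[OF n2b]])
    finally show ?thesis .
  qed
  have m: "mom (a + real n) 0 = sqrt pi * Gamma (real n + b + 1/2) / ((real n + b) * Gamma (real n + b))"
  proof -
    have "mom (a + real n) 0 = Beta (1/2) (a + real n + 1)" by (simp add: mom_def)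
    also have "\<dots> = Gamma (1/2) * Gamma (real n + b + 1/2) / Gamma (real n + b + 1)"
      unfolding Beta_def b_def by (simp add: algebra_simps)
    also have "Gamma (real n + b + 1) = (real n + b) * Gamma (real n + b)"
      using pos_not_nonpos_Int[OF nb] by (rule Gamma_plus1)
    finally show ?thesis by (simp add: Gamma_one_half_real)
  qed
  have d: "Gamma (real n + b) * Gamma (real n + b + 1/2) = 2 powr (1 - 2*(real n + b)) * sqrt pi * Gamma (2*(real n + b))"
    by (rule dup_real[OF nb])
  have g1: "Gamma (real n + b) > 0" using nb by (rule Gamma_real_pos)
  have g2: "Gamma (real n + 2*b) > 0" using n2b by (rule Gamma_real_pos)
  have g3: "Gamma (2*(real n + b)) > 0" using nb by (intro Gamma_real_pos) simp
  have e: "Gamma (real n + 2*b + real n) = Gamma (2*(real n + b))" by (simp add: algebra_simps)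
  have G: "Gamma (real n + b + 1/2) = 2 powr (1 - 2*(real n + b)) * sqrt pi * Gamma (2*(real n + b)) / Gamma (real n + b)"
    using d g1 by (simp add: field_simps)
  have aux: "F / (Gc / Gb) * (sqrt pi * (P * sqrt pi * Gc / Ga) / (N * Ga)) = F * Gb * pi * P / (N * Ga^2)"
    if "Ga \<noteq> 0" "Gc \<noteq> 0" for F Gb Gc Ga P N :: real
  proof -
    have sp: "sqrt pi * sqrt pi = pi" by simp
    show ?thesis using that by (simp add: field_simps power2_eq_square sp)
  qed
  have "H a n = fact n / (Gamma (2*(real n + b)) / Gamma (real n + 2*b)) * (sqrt pi * (2 powr (1 - 2*(real n + b)) * sqrt pi * Gamma (2*(real n + b)) / Gamma (real n + b)) / ((real n + b) * Gamma (real n + b)))"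
    unfolding H_closed p m e G ..
  also have "\<dots> = fact n * Gamma (real n + 2*b) * pi * 2 powr (1 - 2*(real n + b)) / ((real n + b) * Gamma (real n + b)^2)"
    using g1 g3 by (intro aux) auto
  finally show ?thesis .
qed

lemma T_gamma:
  fixes j i :: nat
  assumes i: "i \<ge> 1"
  defines "b \<equiv> a + 1/2"
  defines "n \<equiv> j + 2*i"
  shows "T j i = fact n * Gamma (real j + real i + b)^2 * (real n + b) / (fact i^2 * Gamma (real n + 2*b))
                 * (4^j * 2 powr (2*b - 1) / pi)"
proof -
  have b: "b > -1/2" using a unfolding b_def by simp
  have n1: "n \<ge> 1" using i unfolding n_def by simp
  have nb: "real n + b > 0" using n1 b by linarith
  have n2b: "real n + 2*b > 0" using n1 b by linarith
  have jib: "real j + real i + b > 0" using i b by linarith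
  have p: "pochhammer (real j + real i + a + 1/2) i = Gamma (real n + b) / Gamma (real j + real i + b)"
  proof -
    have "real j + real i + a + 1/2 = real j + real i + b" unfolding b_def by simp
    then have "pochhammer (real j + real i + a + 1/2) i = pochhammer (real j + real i + b) i" by (simp only:)
    also have "\<dots> = Gamma (real j + real i + b + real i) / Gamma (real j + real i + b)"
      by (rule pochhammer_Gamma[OF pos_not_nonpos_Int[OF jib]])
    also have "real j + real i + b + real i = real n + b" unfolding n_def by simp
    finally show ?thesis .
  qed
  have g1: "Gamma (real n + b) > 0" using nb by (rule Gamma_real_pos)
  have g2: "Gamma (real n + 2*b) > 0" using n2b by (rule Gamma_real_pos)
  have g4: "Gamma (real j + real i + b) > 0" using jib by (rule Gamma_real_pos)
  have pw: "2 powr (1 - 2*(real n + b)) = 1 / (4^j * 16^i * 2 powr (2*b - 1))"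
  proof -
    have "2 powr (1 - 2*(real n + b)) = 1 / (2 powr (2 * real n) * 2 powr (2*b - 1))"
      by (simp add: powr_add[symmetric] powr_minus_divide[symmetric] algebra_simps)
    also have "2 powr (2 * real n) = (2::real) ^ (2*n)" by (simp add: powr_realpow[symmetric])
    also have "(2::real) ^ (2*n) = 4^j * 16^i" unfolding n_def
      by (simp add: power_add power_mult)
    finally show ?thesis by simp
  qed
  have pp: "2 powr (2*b - 1) > 0" by simp
  have H': "H a n = fact n * Gamma (real n + 2*b) * pi * (1 / (4^j * 16^i * 2 powr (2*b - 1))) / ((real n + b) * Gamma (real n + b)^2)"
    using H_gamma[OF n1] unfolding b_def[symmetric] pw .
  have aux: "F^2 / (S * I^2 * (Ga / Gj)^2 * (F * Gb * pi * (1 / (A * S * Q)) / (N * Ga^2)))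
     = F * Gj^2 * N / (I^2 * Gb) * (A * Q / pi)"
    if "F > 0" "S > 0" "I > 0" "Ga > 0" "Gj > 0" "Gb > 0" "A > 0" "Q > 0" "N > 0" for F S I Ga Gj Gb A Q N :: real
    using that by (simp add: field_simps power2_eq_square)
  have "T j i = (fact n)^2 / (16^i * (fact i)^2 * (Gamma (real n + b) / Gamma (real j + real i + b))^2 *
      (fact n * Gamma (real n + 2*b) * pi * (1 / (4^j * 16^i * 2 powr (2*b - 1))) / ((real n + b) * Gamma (real n + b)^2)))"
    unfolding T_formula n_def[symmetric] p H' ..
  also have "\<dots> = fact n * Gamma (real j + real i + b)^2 * (real n + b) / (fact i^2 * Gamma (real n + 2*b))
                 * (4^j * 2 powr (2*b - 1) / pi)"
    using g1 g2 g4 nb pp by (intro aux) auto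
  finally show ?thesis .
qed

lemma T_lim: "(\<lambda>i. T j i / real i ^ (2*j)) \<longlonglongrightarrow> 2 * 4^j / pi"
proof -
  define b where "b = a + 1/2"
  have b: "b > -1/2" using a unfolding b_def by simp
  define K where "K = 4^j * 2 powr (2*b - 1) / pi"
  define N where "N i = j + 2*i" for i
  have smN: "strict_mono N" unfolding N_def by (auto simp: strict_mono_def)
  have U0: "(\<lambda>m. Gamma (real m + 1 + (2*b-1)) / (fact m * real m powr (2*b-1))) \<longlonglongrightarrow> 1"
    using b by (intro GA) simp
  have U1: "(\<lambda>i. Gamma (real (N i) + 1 + (2*b-1)) / (fact (N i) * real (N i) powr (2*b-1))) \<longlonglongrightarrow> 1"
    using LIMSEQ_subseq_LIMSEQ[OF U0 smN] by (simp add: o_def)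
  have U: "(\<lambda>i. 1 / (Gamma (real (N i) + 1 + (2*b-1)) / (fact (N i) * real (N i) powr (2*b-1)))) \<longlonglongrightarrow> 1 / 1"
    by (intro tendsto_intros U1) simp
  have V: "(\<lambda>i. Gamma (real i + 1 + (real j + b - 1)) / (fact i * real i powr (real j + b - 1))) \<longlonglongrightarrow> 1"
    using b by (intro GA) simp
  have inf: "filterlim (\<lambda>i. real i) at_infinity sequentially"
    by (rule filterlim_at_top_imp_at_infinity[OF filterlim_real_sequentially])
  have W1: "(\<lambda>i. (real (N i) + b) / real i) \<longlonglongrightarrow> 2"
  proof -
    have "(\<lambda>i. 2 + (real j + b) / real i) \<longlonglongrightarrow> 2 + 0"
      by (intro tendsto_intros tendsto_divide_0[OF tendsto_const inf])
    moreover have "\<forall>\<^sub>F i in sequentially. 2 + (real j + b) / real i = (real (N i) + b) / real i"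
      using eventually_gt_at_top[of "0::nat"] by eventually_elim (simp add: N_def field_simps)
    ultimately show ?thesis by (simp add: tendsto_cong)
  qed
  have W2: "(\<lambda>i. real (N i) / real i) \<longlonglongrightarrow> 2"
  proof -
    have "(\<lambda>i. 2 + real j / real i) \<longlonglongrightarrow> 2 + 0"
      by (intro tendsto_intros tendsto_divide_0[OF tendsto_const inf])
    moreover have "\<forall>\<^sub>F i in sequentially. 2 + real j / real i = real (N i) / real i"
      using eventually_gt_at_top[of "0::nat"] by eventually_elim (simp add: N_def field_simps)
    ultimately show ?thesis by (simp add: tendsto_cong)
  qed
  have W2p: "(\<lambda>i. (real (N i) / real i) powr (1 - 2*b)) \<longlonglongrightarrow> 2 powr (1 - 2*b)"
    by (intro tendsto_powr W2 tendsto_const) simp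
  have L: "(\<lambda>i. K * (1 / (Gamma (real (N i) + 1 + (2*b-1)) / (fact (N i) * real (N i) powr (2*b-1))))
       * (Gamma (real i + 1 + (real j + b - 1)) / (fact i * real i powr (real j + b - 1)))^2
       * ((real (N i) + b) / real i) * (real (N i) / real i) powr (1 - 2*b))
      \<longlonglongrightarrow> K * (1/1) * 1^2 * 2 * 2 powr (1 - 2*b)"
    by (intro tendsto_mult tendsto_const U tendsto_power V W1 W2p)
  have "K * (1/1) * 1^2 * 2 * 2 powr (1 - 2*b) = 2 * 4^j / pi"
  proof -
    have "2 powr (2*b - 1) * 2 powr (1 - 2*b) = (1::real)" by (simp add: powr_add[symmetric])
    then show ?thesis unfolding K_def by (simp add: field_simps)
  qed
  note L = L[unfolded this]
  show ?thesis
  proof (rule Lim_transform_eventually[OF L])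
    show "\<forall>\<^sub>F i in sequentially. K * (1 / (Gamma (real (N i) + 1 + (2*b-1)) / (fact (N i) * real (N i) powr (2*b-1))))
       * (Gamma (real i + 1 + (real j + b - 1)) / (fact i * real i powr (real j + b - 1)))^2
       * ((real (N i) + b) / real i) * (real (N i) / real i) powr (1 - 2*b) = T j i / real i ^ (2*j)"
      using eventually_ge_at_top[of "1::nat"]
    proof eventually_elim
      case (elim i)
      have i0: "real i > 0" using elim by simp
      have n0: "real (N i) > 0" unfolding N_def using elim by simp
      have ga1: "Gamma (real (N i) + 1 + (2*b-1)) = Gamma (real (N i) + 2*b)" by (simp add: algebra_simps)
      have ga2: "Gamma (real i + 1 + (real j + b - 1)) = Gamma (real j + real i + b)" by (simp add: algebra_simps)
      have e1: "real (N i) powr (1 - 2*b) = 1 / real (N i) powr (2*b-1)"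
        using n0 by (simp add: powr_minus_divide[symmetric])
      have e2: "real i ^ (2*j) = (real i powr (real j + b - 1))^2 * real i * real i powr (1 - 2*b)"
      proof -
        have "(real i powr (real j + b - 1))^2 * real i * real i powr (1 - 2*b)
           = real i powr (real j + b - 1) * real i powr (real j + b - 1) * real i powr 1 * real i powr (1 - 2*b)"
          using i0 by (simp add: power2_eq_square)
        also have "\<dots> = real i powr ((real j + b - 1) + (real j + b - 1) + 1 + (1 - 2*b))"
          by (simp only: powr_add)
        also have "(real j + b - 1) + (real j + b - 1) + 1 + (1 - 2*b) = real (2*j)" by simp
        also have "real i powr real (2*j) = real i ^ (2*j)" using i0 by (rule powr_realpow)
        finally show ?thesis by simp
      qed
      have e3: "(real (N i) / real i) powr (1 - 2*b) = real (N i) powr (1 - 2*b) / real i powr (1 - 2*b)"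
        using n0 i0 by (simp add: powr_divide)
      have gp1: "Gamma (real (N i) + 2*b) > 0" using n0 b elim unfolding N_def by (intro Gamma_real_pos) linarith
      have gp2: "Gamma (real j + real i + b) > 0" using b elim by (intro Gamma_real_pos) linarith
      have aux: "K * (1 / (Gb / (F * np))) * (Gj / (I * ip))^2 * (Nb / ii) * ((1 / np) / ipm)
           = F * Gj^2 * Nb / (I^2 * Gb) * K / (ip^2 * ii * ipm)"
        if "np > 0" "ip > 0" "ii > 0" "ipm > 0" "Gb > 0" "I > 0" "F > 0" for K Gb F np Gj I ip Nb ii ipm :: real
        using that by (simp add: field_simps power2_eq_square)
      have "T j i / real i ^ (2*j) = fact (N i) * Gamma (real j + real i + b)^2 * (real (N i) + b) / (fact i^2 * Gamma (real (N i) + 2*b)) * K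
          / ((real i powr (real j + b - 1))^2 * real i * real i powr (1 - 2*b))"
        unfolding T_gamma[OF elim] e2 K_def N_def b_def ..
      also have "\<dots> = K * (1 / (Gamma (real (N i) + 2*b) / (fact (N i) * real (N i) powr (2*b-1))))
       * (Gamma (real j + real i + b) / (fact i * real i powr (real j + b - 1)))^2
       * ((real (N i) + b) / real i) * ((1 / real (N i) powr (2*b-1)) / real i powr (1 - 2*b))"
        using n0 i0 gp1 by (intro aux[symmetric]) auto
      finally show ?case unfolding ga1 ga2 e3 e1 by simp
    qed
  qed
qed

end


lemma poly_hpderiv0: "poly ((pderiv ^^ j) p) 0 = fact j * coeff (p :: real poly) j"
  by (simp add: poly_0_coeff_0 coeff_higher_pderiv pochhammer_fact)

lemma one_over_pow_lim: "(\<lambda>n. 1 / real n ^ Suc k) \<longlonglongrightarrow> 0"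
proof -
  have "(\<lambda>n. (1 / real n) ^ Suc k) \<longlonglongrightarrow> 0 ^ Suc k"
    by (intro tendsto_power lim_1_over_n)
  then show ?thesis by (simp add: power_one_over)
qed

lemma sum_1n_shift: fixes f :: "nat \<Rightarrow> real" and n :: nat shows "f 0 = 0 \<Longrightarrow> (\<Sum>i=1..n. f i) = (\<Sum>i<n. f i) + f n"
proof (induction n)
  case 0 then show ?case by simp
next
  case (Suc n)
  then show ?case by (simp add: sum.cl_ivl_Suc)
qed

lemma LTE: "(f \<longlongrightarrow> l') F \<Longrightarrow> eventually (\<lambda>x. f x = g x) F \<Longrightarrow> l' = l \<Longrightarrow> (g \<longlongrightarrow> l) F"
  using Lim_transform_eventually by blast

context onb
begin

lemma kernel_sum: "(\<Sum>m<j+2*i. (poly ((pderiv ^^ j) (c m)) 0)^2) = (\<Sum>l<i. T j l)"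
proof (induction i)
  case 0
  have "coeff (c m) j = 0" if "m < j" for m using that deg[of m] by (intro coeff_eq_0) auto
  then show ?case by (simp add: poly_hpderiv0)
next
  case (Suc i)
  have "j + 2 * Suc i = Suc (Suc (j + 2*i))" by simp
  moreover have "coeff (c (Suc (j + 2*i))) j = 0" by (rule coeff_odd[of j i]) simp
  ultimately show ?case using Suc by (simp add: poly_hpderiv0 T_def)
qed

lemma kernel_eq: "i \<ge> 1 \<Longrightarrow> kernelK c j (j + 2*i - 1) = (\<Sum>l<i. T j l)"
proof -
  assume i: "i \<ge> 1"
  have "{0..j + 2*i - 1} = {..<j+2*i}" using i by auto
  then show ?thesis unfolding kernelK_def using kernel_sum by simp
qed

lemma lam_step: "i \<ge> 1 \<Longrightarrow> geg_lambda a (j + 2*i) - geg_lambda a (j + 2*i - 2) = 8 * real i + 4 * real j + 4 * a - 2"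
  unfolding geg_lambda_def by (simp add: of_nat_diff power2_eq_square algebra_simps)

lemma main_lim:
  "(\<lambda>n. lambda_tilde a M c j n / real n ^ (2*j+3)) \<longlonglongrightarrow> M * (16 * 4^j / pi) / ((2 * real j + 1) * (2 * real j + 3))"
proof -
  define S where "S i = (\<Sum>l<i. T j l)" for i
  define d where "d i = 8 * real i + 4 * real j + 4 * a - 2" for i
  define Q where "Q i = d i * S i" for i
  define C1 where "C1 = (2 * 4^j / pi) / real (Suc (2*j))"
  have SL: "(\<lambda>i. S i / real i ^ Suc (2*j)) \<longlonglongrightarrow> C1"
    unfolding S_def C1_def by (rule cesaro[OF T_lim])
  have inf: "filterlim (\<lambda>i. real i) at_infinity sequentially"
    by (rule filterlim_at_top_imp_at_infinity[OF filterlim_real_sequentially])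
  have dL: "(\<lambda>i. d i / real i) \<longlonglongrightarrow> 8"
  proof -
    have "(\<lambda>i. 8 + (4 * real j + 4 * a - 2) / real i) \<longlonglongrightarrow> 8 + 0"
      by (intro tendsto_intros tendsto_divide_0[OF tendsto_const inf])
    moreover have "\<forall>\<^sub>F i in sequentially. 8 + (4 * real j + 4 * a - 2) / real i = d i / real i"
      using eventually_gt_at_top[of "0::nat"] by eventually_elim (simp add: d_def field_simps)
    ultimately show ?thesis by (rule LTE) simp
  qed
  have QL: "(\<lambda>i. Q i / real i ^ (2*j+2)) \<longlonglongrightarrow> 8 * C1"
  proof -
    have "(\<lambda>i. (d i / real i) * (S i / real i ^ Suc (2*j))) \<longlonglongrightarrow> 8 * C1"
      by (intro tendsto_mult dL SL)
    moreover have "\<forall>\<^sub>F i in sequentially. (d i / real i) * (S i / real i ^ Suc (2*j)) = Q i / real i ^ (2*j+2)"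
      using eventually_gt_at_top[of "0::nat"] by eventually_elim (simp add: Q_def field_simps)
    ultimately show ?thesis by (rule LTE) simp
  qed
  have QS: "(\<lambda>n. (\<Sum>i<n. Q i) / real n ^ Suc (2*j+2)) \<longlonglongrightarrow> 8 * C1 / real (Suc (2*j+2))"
    by (rule cesaro[OF QL])
  have Qn: "(\<lambda>n. Q n / real n ^ Suc (2*j+2)) \<longlonglongrightarrow> 0"
  proof -
    have "(\<lambda>n. (Q n / real n ^ (2*j+2)) * (1 / real n)) \<longlonglongrightarrow> 8 * C1 * 0"
      by (intro tendsto_mult QL lim_1_over_n)
    moreover have "\<forall>\<^sub>F n in sequentially. (Q n / real n ^ (2*j+2)) * (1 / real n) = Q n / real n ^ Suc (2*j+2)"
      using eventually_gt_at_top[of "0::nat"] by eventually_elim (simp add: field_simps)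
    ultimately show ?thesis by (rule LTE) simp
  qed
  have GL: "(\<lambda>n. geg_lambda a (j + 2*n) / real n ^ (2*j+3)) \<longlonglongrightarrow> 0"
  proof -
    have r: "(\<lambda>n. real (j + 2*n) / real n) \<longlonglongrightarrow> 2"
    proof -
      have "(\<lambda>i. 2 + real j / real i) \<longlonglongrightarrow> 2 + 0"
        by (intro tendsto_intros tendsto_divide_0[OF tendsto_const inf])
      moreover have "\<forall>\<^sub>F i in sequentially. 2 + real j / real i = real (j + 2*i) / real i"
        using eventually_gt_at_top[of "0::nat"] by eventually_elim (simp add: field_simps)
      ultimately show ?thesis by (rule LTE) simp
    qed
    have "(\<lambda>n. ((real (j + 2*n) / real n)^2 + (real (j + 2*n) / real n) * (2*a+1) * (1 / real n))
              * (1 / real n ^ Suc (2*j))) \<longlonglongrightarrow> (2^2 + 2 * (2*a+1) * 0) * 0"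
      by (intro tendsto_intros r lim_1_over_n one_over_pow_lim)
    moreover have "\<forall>\<^sub>F n in sequentially. ((real (j + 2*n) / real n)^2 + (real (j + 2*n) / real n) * (2*a+1) * (1 / real n))
              * (1 / real n ^ Suc (2*j)) = geg_lambda a (j + 2*n) / real n ^ (2*j+3)"
      using eventually_gt_at_top[of "0::nat"]
    proof eventually_elim
      case (elim n)
      have aux: "((m/x)^2 + (m/x)*A*(1/x)) * (1/Y) = (m^2 + m*A)/(x^2*Y)" if "x > 0" "Y > 0" for m x A Y :: real
        using that by (simp add: field_simps power2_eq_square)
      have "2*j+3 = 2 + Suc (2*j)" by simp
      then have p: "real n ^ (2*j+3) = real n ^ 2 * real n ^ Suc (2*j)" by (simp only: power_add)
      show ?case unfolding p geg_lambda_def using elim by (intro aux) auto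
    qed
    ultimately show ?thesis by (rule LTE) simp
  qed
  have Q0: "Q 0 = 0" unfolding Q_def S_def by simp
  have LT: "lambda_tilde a M c j n = geg_lambda a (j + 2*n) + M * ((\<Sum>i<n. Q i) + Q n)" for n
  proof -
    have "(\<Sum>i=1..n. (geg_lambda a (j + 2*i) - geg_lambda a (j + 2*i - 2)) * kernelK c j (j + 2*i - 1))
        = (\<Sum>i=1..n. Q i)"
    proof (intro sum.cong refl)
      fix i assume "i \<in> {1..n}"
      then have i: "i \<ge> 1" by simp
      show "(geg_lambda a (j + 2*i) - geg_lambda a (j + 2*i - 2)) * kernelK c j (j + 2*i - 1) = Q i"
        unfolding lam_step[OF i] kernel_eq[OF i] Q_def d_def S_def ..
    qed
    also have "\<dots> = (\<Sum>i<n. Q i) + Q n" using Q0 by (rule sum_1n_shift)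
    finally show ?thesis unfolding lambda_tilde_def by simp
  qed
  have e: "Suc (2*j+2) = 2*j+3" by simp
  note QS' = QS[unfolded e] and Qn' = Qn[unfolded e]
  have "(\<lambda>n. geg_lambda a (j + 2*n) / real n ^ (2*j+3) + M * ((\<Sum>i<n. Q i) / real n ^ (2*j+3) + Q n / real n ^ (2*j+3)))
     \<longlonglongrightarrow> 0 + M * (8 * C1 / real (2*j+3) + 0)"
    by (intro tendsto_intros GL QS' Qn')
  moreover have "(\<lambda>n. geg_lambda a (j + 2*n) / real n ^ (2*j+3) + M * ((\<Sum>i<n. Q i) / real n ^ (2*j+3) + Q n / real n ^ (2*j+3)))
     = (\<lambda>n. lambda_tilde a M c j n / real n ^ (2*j+3))"
    unfolding LT by (simp add: add_divide_distrib distrib_left)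
  moreover have "0 + M * (8 * C1 / real (2*j+3) + 0) = M * (16 * 4^j / pi) / ((2 * real j + 1) * (2 * real j + 3))"
    unfolding C1_def by (simp add: field_simps)
  ultimately show ?thesis by simp
qed

end


theorem mainTheorem8:
  fixes \<alpha> M :: real and j r :: nat and c :: "nat \<Rightarrow> real poly"
  assumes "\<alpha> > -1" and "M > 0"
    and "orthonormal_gegenbauer \<alpha> c"
  shows "(j = 2*r \<longrightarrow>
            (\<lambda>n. lambda_tilde \<alpha> M c j n / real n ^ (4*r+3))
              \<longlonglongrightarrow> 2^(4*(r+1)) * M / (pi * (4*r+3) * (4*r+1)))
       \<and> (j = 2*r+1 \<longrightarrow>
            (\<lambda>n. lambda_tilde \<alpha> M c j n / real n ^ (4*r+5))
              \<longlonglongrightarrow> 2^(4*r+6) * M / (pi * (4*r+5) * (4*r+3)))"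
proof -
  have O: "onb \<alpha> c" by (rule onb_from_hyp[OF assms(1) assms(3)])
  have L: "(\<lambda>n. lambda_tilde \<alpha> M c j n / real n ^ (2*j+3)) \<longlonglongrightarrow> M * (16 * 4^j / pi) / ((2 * real j + 1) * (2 * real j + 3))"
    by (rule onb.main_lim[OF O])
  have p4: "(4::real)^k = 2^(2*k)" for k by (simp add: power_mult)
  show ?thesis
  proof (intro conjI impI)
    assume j: "j = 2*r"
    have e1: "2*j+3 = 4*r+3" using j by simp
    have "(16::real) * 4^j = 2^(4*(r+1))"
    proof -
      have "(16::real) * 4^j = 2^4 * 2^(4*r)" unfolding p4 j by (simp add: mult.assoc)
      also have "\<dots> = 2^(4 + 4*r)" by (rule power_add[symmetric])
      also have "4 + 4*r = 4*(r+1)" by simp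
      finally show ?thesis .
    qed
    then have e2: "M * (16 * 4^j / pi) / ((2 * real j + 1) * (2 * real j + 3)) = 2^(4*(r+1)) * M / (pi * (4*r+3) * (4*r+1))"
      using j by (simp add: field_simps)
    show "(\<lambda>n. lambda_tilde \<alpha> M c j n / real n ^ (4*r+3)) \<longlonglongrightarrow> 2^(4*(r+1)) * M / (pi * (4*r+3) * (4*r+1))"
      using L unfolding e1 e2 .
  next
    assume j: "j = 2*r+1"
    have e1: "2*j+3 = 4*r+5" using j by simp
    have "(16::real) * 4^j = 2^(4*r+6)"
    proof -
      have "(16::real) * 4^j = 2^4 * 2^(4*r+2)" unfolding p4 j by (simp add: algebra_simps)
      also have "\<dots> = 2^(4 + (4*r+2))" by (rule power_add[symmetric])
      also have "4 + (4*r+2) = 4*r+6" by simp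
      finally show ?thesis .
    qed
    then have e2: "M * (16 * 4^j / pi) / ((2 * real j + 1) * (2 * real j + 3)) = 2^(4*r+6) * M / (pi * (4*r+5) * (4*r+3))"
      using j by (simp add: field_simps)
    show "(\<lambda>n. lambda_tilde \<alpha> M c j n / real n ^ (4*r+5)) \<longlonglongrightarrow> 2^(4*r+6) * M / (pi * (4*r+5) * (4*r+3))"
      using L unfolding e1 e2 .
  qed
qed


end
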